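(* Let $n\ge 2$, and let $S$ be a semitransitive subsemigroup of $\mathcal{I}_n\setminus\mathcal{S}_n$ with $|S|\le 2n$, with non-zero idempotents $g,h$ and transitivity blocks $X_1,\dots,X_m$. Let $t=\min_{1\le i\le m}|X_i|$ and $N=(gSh\cup hSg)\setminus\{0\}$. Then $|N|\ge n-t$.
   Context: $\mathcal{I}_n$ denotes the symmetric inverse semigroup of all partial injective maps of $X=\{1,\dots,n\}$ to itself, with maps written on the right and composed left to right; $0$ denotes the empty map. $\mathcal{S}_n$ is the symmetric group on $X$. A semigroup $S$ of partial transformations of $X$ is semitransitive if for all $x,y\in X$ there is $\varphi\in S$ with $x\varphi=y$ or $y\varphi=x$. It is known that such an $S$ (semitransitive in $\mathcal{I}_n\setminus\mathcal{S}_n$, $|S|\le 2n$) has exactly two non-zero idempotents $g,h$, with disjoint domains whose union is $X$. For $x,y\in X$ write $x\ge y$ if $x\varphi=y$ for some $\varphi\in S$; this is a total preorder, and its equivalence classes are the transitivity blocks $X_1,\dots,X_m$, numbered so that for $x\in X_i$, $y\in X_j$ one has $x\ge y$ iff $i\le j$. $gSh=\{g\sigma h:\sigma\in S\}$, and similarly $hSg$. *)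

theory Defs
  imports Main
begin

definition pinj :: "nat \<Rightarrow> (nat \<rightharpoonup> nat) \<Rightarrow> bool" where
  "pinj n f \<longleftrightarrow> dom f \<subseteq> {1..n} \<and> ran f \<subseteq> {1..n} \<and> inj_on f (dom f)"

definition symInv :: "nat \<Rightarrow> (nat \<rightharpoonup> nat) set" where
  "symInv n = {f. pinj n f}"

text \<open>The symmetric group S_n, as the total (hence bijective) elements of I_n.\<close>
definition symGrp :: "nat \<Rightarrow> (nat \<rightharpoonup> nat) set" where
  "symGrp n = {f \<in> symInv n. dom f = {1..n}}"

text \<open>Composition with maps written on the right: x (f * g) = (x f) g.\<close>
definition pcomp :: "(nat \<rightharpoonup> nat) \<Rightarrow> (nat \<rightharpoonup> nat) \<Rightarrow> (nat \<rightharpoonup> nat)" (infixl "\<cdot>" 70) where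
  "f \<cdot> g = g \<circ>\<^sub>m f"

definition subsemigroup :: "(nat \<rightharpoonup> nat) set \<Rightarrow> bool" where
  "subsemigroup S \<longleftrightarrow> (\<forall>a\<in>S. \<forall>b\<in>S. a \<cdot> b \<in> S)"

definition semitransitive :: "nat \<Rightarrow> (nat \<rightharpoonup> nat) set \<Rightarrow> bool" where
  "semitransitive n S \<longleftrightarrow>
     (\<forall>x\<in>{1..n}. \<forall>y\<in>{1..n}. \<exists>\<phi>\<in>S. \<phi> x = Some y \<or> \<phi> y = Some x)"

text \<open>Non-zero idempotents of S (0 is the empty map).\<close>
definition nz_idempotents :: "(nat \<rightharpoonup> nat) set \<Rightarrow> (nat \<rightharpoonup> nat) set" where
  "nz_idempotents S = {e \<in> S. e \<cdot> e = e \<and> e \<noteq> Map.empty}"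

text \<open>The preorder x \<ge> y iff x \<phi> = y for some \<phi> in S.\<close>
definition reach :: "(nat \<rightharpoonup> nat) set \<Rightarrow> nat \<Rightarrow> nat \<Rightarrow> bool" where
  "reach S x y \<longleftrightarrow> (\<exists>\<phi>\<in>S. \<phi> x = Some y)"

definition blocks :: "nat \<Rightarrow> (nat \<rightharpoonup> nat) set \<Rightarrow> nat set set" where
  "blocks n S = (\<lambda>x. {y \<in> {1..n}. reach S x y \<and> reach S y x}) ` {1..n}"

definition sandwich :: "(nat \<rightharpoonup> nat) \<Rightarrow> (nat \<rightharpoonup> nat) set \<Rightarrow> (nat \<rightharpoonup> nat) \<Rightarrow> (nat \<rightharpoonup> nat) set" where
  "sandwich a S b = {a \<cdot> \<sigma> \<cdot> b | \<sigma>. \<sigma> \<in> S}"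

end

theory Submission
  imports Defs
begin


lemma pcomp_Some: "(f \<cdot> g) x = Some z \<longleftrightarrow> (\<exists>y. f x = Some y \<and> g y = Some z)"
  by (auto simp: pcomp_def map_comp_Some_iff)

lemma pcomp_None: "(f \<cdot> g) x = None \<longleftrightarrow> (f x = None \<or> (\<exists>y. f x = Some y \<and> g y = None))"
  by (auto simp: pcomp_def map_comp_None_iff)

lemma pcomp_apply: "(f \<cdot> g) x = (case f x of None \<Rightarrow> None | Some y \<Rightarrow> g y)"
  by (simp add: pcomp_def map_comp_def)

lemma pcomp_assoc: "(f \<cdot> g) \<cdot> h = f \<cdot> (g \<cdot> h)"
  by (rule ext) (simp add: pcomp_apply split: option.split)

definition idm :: "nat set \<Rightarrow> (nat \<rightharpoonup> nat)" where
  "idm A = (\<lambda>x. if x \<in> A then Some x else None)"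

lemma idm_Some[simp]: "idm A x = Some y \<longleftrightarrow> x \<in> A \<and> y = x"
  by (auto simp: idm_def)

lemma dom_idm[simp]: "dom (idm A) = A" by (auto simp: idm_def dom_def)

definition pinjX :: "nat set \<Rightarrow> (nat \<rightharpoonup> nat) \<Rightarrow> bool" where
  "pinjX X f \<longleftrightarrow> inj_on f (dom f) \<and> dom f \<subseteq> X \<and> ran f \<subseteq> X"

definition sett :: "nat set \<Rightarrow> (nat \<rightharpoonup> nat) set \<Rightarrow> nat set \<Rightarrow> nat set \<Rightarrow> bool" where
  "sett X S A B \<longleftrightarrow> finite X \<and> (\<forall>\<phi>\<in>S. pinjX X \<phi>) \<and> (\<forall>a\<in>S. \<forall>b\<in>S. a \<cdot> b \<in> S)
     \<and> (\<forall>x\<in>X. \<forall>y\<in>X. \<exists>\<phi>\<in>S. \<phi> x = Some y \<or> \<phi> y = Some x)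
     \<and> A \<union> B = X \<and> A \<inter> B = {} \<and> A \<noteq> {} \<and> B \<noteq> {} \<and> idm A \<in> S \<and> idm B \<in> S"

definition NN :: "(nat \<rightharpoonup> nat) set \<Rightarrow> nat set \<Rightarrow> nat set \<Rightarrow> (nat \<rightharpoonup> nat) set" where
  "NN S A B = (sandwich (idm A) S (idm B) \<union> sandwich (idm B) S (idm A)) - {Map.empty}"

definition blk :: "nat set \<Rightarrow> (nat \<rightharpoonup> nat) set \<Rightarrow> nat \<Rightarrow> nat set" where
  "blk X S x = {y \<in> X. reach S x y \<and> reach S y x}"

lemma pinj_inj: "pinjX X f \<Longrightarrow> f x = Some z \<Longrightarrow> f y = Some z \<Longrightarrow> x = y"
  unfolding pinjX_def by (metis domI inj_on_def)

lemma pinj_dom: "pinjX X f \<Longrightarrow> f x = Some y \<Longrightarrow> x \<in> X"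
  unfolding pinjX_def by blast

lemma pinj_ran: "pinjX X f \<Longrightarrow> f x = Some y \<Longrightarrow> y \<in> X"
  unfolding pinjX_def by (meson ranI subsetD)

lemma pinjXI: "(\<And>x y z. f x = Some z \<Longrightarrow> f y = Some z \<Longrightarrow> x = y) \<Longrightarrow>
   (\<And>x y. f x = Some y \<Longrightarrow> x \<in> X \<and> y \<in> X) \<Longrightarrow> pinjX X f"
  unfolding pinjX_def inj_on_def dom_def ran_def by force

context
  fixes X S A B
  assumes st: "sett X S A B"
begin

lemma st_fin: "finite X" using st by (simp add: sett_def)
lemma st_pinj: "\<phi> \<in> S \<Longrightarrow> pinjX X \<phi>" using st by (simp add: sett_def)
lemma st_cl: "a \<in> S \<Longrightarrow> b \<in> S \<Longrightarrow> a \<cdot> b \<in> S" using st by (simp add: sett_def)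
lemma st_semi: "x \<in> X \<Longrightarrow> y \<in> X \<Longrightarrow> \<exists>\<phi>\<in>S. \<phi> x = Some y \<or> \<phi> y = Some x"
  using st by (simp add: sett_def)
lemma st_AB: "A \<union> B = X" "A \<inter> B = {}" "A \<noteq> {}" "B \<noteq> {}" "idm A \<in> S" "idm B \<in> S"
  using st by (simp_all add: sett_def)

lemma st_inj: "\<phi> \<in> S \<Longrightarrow> \<phi> x = Some z \<Longrightarrow> \<phi> y = Some z \<Longrightarrow> x = y"
  using st_pinj pinj_inj by blast
lemma st_X: "\<phi> \<in> S \<Longrightarrow> \<phi> x = Some y \<Longrightarrow> x \<in> X \<and> y \<in> X"
  using st_pinj pinj_dom pinj_ran by blast

lemma reach_X: "reach S x y \<Longrightarrow> x \<in> X \<and> y \<in> X"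
  unfolding reach_def using st_X by blast
lemma reach_refl: "x \<in> X \<Longrightarrow> reach S x x"
  unfolding reach_def using st_semi by blast
lemma reach_trans: "reach S x y \<Longrightarrow> reach S y z \<Longrightarrow> reach S x z"
  unfolding reach_def using st_cl pcomp_Some by metis
lemma reach_total: "x \<in> X \<Longrightarrow> y \<in> X \<Longrightarrow> reach S x y \<or> reach S y x"
  unfolding reach_def using st_semi by blast

lemma exists_top: "finite Y \<Longrightarrow> Y \<noteq> {} \<Longrightarrow> Y \<subseteq> X \<Longrightarrow> \<exists>y\<in>Y. \<forall>v\<in>Y. reach S y v"
proof (induction Y rule: finite_ne_induct)
  case (singleton x) then show ?case using reach_refl by auto
next
  case (insert x F)
  then obtain y where y: "y \<in> F" "\<forall>v\<in>F. reach S y v" by auto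
  have "x \<in> X" "y \<in> X" using insert y by auto
  then consider "reach S x y" | "reach S y x" using reach_total by blast
  then show ?case
  proof cases
    case 1 then show ?thesis using y reach_trans \<open>x \<in> X\<close> reach_refl by blast
  next
    case 2 then show ?thesis using y by blast
  qed
qed

lemma exists_bot: "finite Y \<Longrightarrow> Y \<noteq> {} \<Longrightarrow> Y \<subseteq> X \<Longrightarrow> \<exists>y\<in>Y. \<forall>v\<in>Y. reach S v y"
proof (induction Y rule: finite_ne_induct)
  case (singleton x) then show ?case using reach_refl by auto
next
  case (insert x F)
  then obtain y where y: "y \<in> F" "\<forall>v\<in>F. reach S v y" by auto
  have "x \<in> X" "y \<in> X" using insert y by auto
  then consider "reach S x y" | "reach S y x" using reach_total by blast
  then show ?case
  proof cases
    case 2 then show ?thesis using y reach_trans \<open>x \<in> X\<close> reach_refl by blast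
  next
    case 1 then show ?thesis using y by blast
  qed
qed

lemma gsh_in_S: "\<sigma> \<in> S \<Longrightarrow> idm A \<cdot> \<sigma> \<cdot> idm B \<in> S"
  using st_cl st_AB by blast
lemma hsg_in_S: "\<sigma> \<in> S \<Longrightarrow> idm B \<cdot> \<sigma> \<cdot> idm A \<in> S"
  using st_cl st_AB by blast

lemma NN_gsh: "\<sigma> \<in> S \<Longrightarrow> (idm A \<cdot> \<sigma> \<cdot> idm B) x = Some y \<Longrightarrow> idm A \<cdot> \<sigma> \<cdot> idm B \<in> NN S A B"
  unfolding NN_def sandwich_def by auto
lemma NN_hsg: "\<sigma> \<in> S \<Longrightarrow> (idm B \<cdot> \<sigma> \<cdot> idm A) x = Some y \<Longrightarrow> idm B \<cdot> \<sigma> \<cdot> idm A \<in> NN S A B"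
  unfolding NN_def sandwich_def by auto

lemma NN_S: "f \<in> NN S A B \<Longrightarrow> f \<in> S"
  unfolding NN_def sandwich_def using gsh_in_S hsg_in_S by auto

lemma NN_dom: "f \<in> NN S A B \<Longrightarrow> f x = Some y \<Longrightarrow> f z = Some v \<Longrightarrow> (x \<in> A \<longleftrightarrow> z \<in> A)"
  unfolding NN_def sandwich_def using st_AB(2) by (auto simp: pcomp_Some)

lemma NN_color: "f \<in> NN S A B \<Longrightarrow> f x = Some y \<Longrightarrow> (x \<in> A \<and> y \<in> B) \<or> (x \<in> B \<and> y \<in> A)"
  unfolding NN_def sandwich_def by (auto simp: pcomp_Some)

end

lemma finite_maps: "finite X \<Longrightarrow> finite {f::nat \<rightharpoonup> nat. dom f \<subseteq> X \<and> ran f \<subseteq> X}"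
proof -
  assume f: "finite X"
  have "{f::nat \<rightharpoonup> nat. dom f \<subseteq> X \<and> ran f \<subseteq> X} = (\<Union>D\<in>Pow X. {m. dom m = D \<and> ran m \<subseteq> X})" by auto
  also have "finite \<dots>" using f by (intro finite_UN_I) (auto intro: finite_set_of_finite_maps finite_subset)
  finally show ?thesis .
qed

lemma st_finS: "sett X S A B \<Longrightarrow> finite S"
proof -
  assume st: "sett X S A B"
  have "S \<subseteq> {f. dom f \<subseteq> X \<and> ran f \<subseteq> X}" using st_pinj[OF st] unfolding pinjX_def by blast
  then show ?thesis by (rule finite_subset) (rule finite_maps[OF st_fin[OF st]])
qed

lemma st_finNN: "sett X S A B \<Longrightarrow> finite (NN S A B)"
  by (rule finite_subset[of _ S]) (auto dest: NN_S st_finS)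




lemma Kran:
  assumes st: "sett X S A B"
  shows "r \<in> S \<Longrightarrow> y \<in> ran r \<Longrightarrow> \<exists>r'\<in>S. y \<in> ran r' \<and> ran r' \<subseteq> {v. reach S y v} \<and> dom r' \<subseteq> dom r"
proof (induction "card (ran r \<inter> {v. reach S v y \<and> \<not> reach S y v})" arbitrary: r rule: less_induct)
  case less
  let ?U = "ran r \<inter> {v. reach S v y \<and> \<not> reach S y v}"
  have ranX: "ran r \<subseteq> X" using st_pinj[OF st less(2)] by (simp add: pinjX_def)
  have yX: "y \<in> X" using less(3) ranX by blast
  show ?case
  proof (cases "?U = {}")
    case True
    have "ran r \<subseteq> {v. reach S y v}"
    proof
      fix v assume v: "v \<in> ran r"
      then have "v \<in> X" using ranX by blast
      then have "reach S v y \<or> reach S y v" using reach_total[OF st] yX by blast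
      then show "v \<in> {v. reach S y v}" using True v by blast
    qed
    then show ?thesis using less by blast
  next
    case False
    then obtain w where w: "w \<in> ran r" "reach S w y" "\<not> reach S y w" by blast
    then obtain s where s: "s \<in> S" "s w = Some y" unfolding reach_def by blast
    obtain x0 where x0: "r x0 = Some w" using w(1) by (auto simp: ran_def)
    let ?r2 = "r \<cdot> s"
    have r2S: "?r2 \<in> S" using st_cl[OF st less(2) s(1)] .
    have yr2: "y \<in> ran ?r2" using x0 s by (auto simp: ran_def pcomp_Some)
    have domr2: "dom ?r2 \<subseteq> dom r" by (auto simp: dom_def pcomp_Some)
    have finU: "finite ?U" using ranX st_fin[OF st] finite_subset by blast
    have sub: "ran ?r2 \<inter> {v. reach S v y \<and> \<not> reach S y v} \<subseteq> (\<lambda>v. the (s v)) ` (?U - {w})"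
    proof
      fix z assume z: "z \<in> ran ?r2 \<inter> {v. reach S v y \<and> \<not> reach S y v}"
      then obtain x1 where "?r2 x1 = Some z" by (auto simp: ran_def)
      then obtain v where v: "r x1 = Some v" "s v = Some z" by (auto simp: pcomp_Some)
      have vr: "v \<in> ran r" using v by (auto simp: ran_def)
      have rvz: "reach S v z" using v s unfolding reach_def by blast
      have "reach S v y" using rvz z reach_trans[OF st] by blast
      moreover have "\<not> reach S y v" using rvz z reach_trans[OF st] by blast
      moreover have "v \<noteq> w"
      proof
        assume "v = w"
        then have "z = y" using v s by simp
        then show False using z reach_refl[OF st] yX by blast
      qed
      ultimately show "z \<in> (\<lambda>v. the (s v)) ` (?U - {w})" using vr v by force
    qed
    have "card (ran ?r2 \<inter> {v. reach S v y \<and> \<not> reach S y v}) \<le> card ((\<lambda>v. the (s v)) ` (?U - {w}))"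
      using sub finU by (intro card_mono) auto
    also have "\<dots> \<le> card (?U - {w})" using finU by (intro card_image_le) auto
    also have "\<dots> < card ?U" using finU w by (intro card_Diff1_less) auto
    finally have lt: "card (ran ?r2 \<inter> {v. reach S v y \<and> \<not> reach S y v}) < card ?U" .
    obtain r' where "r' \<in> S" "y \<in> ran r'" "ran r' \<subseteq> {v. reach S y v}" "dom r' \<subseteq> dom ?r2"
      using less(1)[OF lt r2S yr2] by blast
    then show ?thesis using domr2 by blast
  qed
qed



lemma mapL:
  assumes st: "sett X S A B" and x: "x \<in> A" and y: "y \<in> B" and top: "\<forall>a\<in>A. reach S x a"
    and xy: "reach S x y"
  shows "\<exists>f\<in>NN S A B. f x = Some y \<and> ran f \<subseteq> {v. reach S y v} \<and> dom f \<subseteq> A"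
proof -
  obtain \<phi> where phi: "\<phi> \<in> S" "\<phi> x = Some y" using xy unfolding reach_def by blast
  let ?r0 = "idm A \<cdot> \<phi> \<cdot> idm B"
  have r0S: "?r0 \<in> S" using gsh_in_S[OF st phi(1)] .
  have r0x: "?r0 x = Some y" using x y phi by (auto simp: pcomp_Some)
  then have "y \<in> ran ?r0" by (auto simp: ran_def)
  then obtain r1 where r1: "r1 \<in> S" "y \<in> ran r1" "ran r1 \<subseteq> {v. reach S y v}" "dom r1 \<subseteq> dom ?r0"
    using Kran[OF st r0S] by blast
  obtain x1 where x1: "r1 x1 = Some y" using r1(2) by (auto simp: ran_def)
  have "x1 \<in> dom ?r0" using x1 r1(4) by blast
  then have x1A: "x1 \<in> A" by (auto simp: dom_def pcomp_Some)
  obtain \<alpha> where al: "\<alpha> \<in> S" "\<alpha> x = Some x1" using top x1A unfolding reach_def by blast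
  let ?f = "idm A \<cdot> (\<alpha> \<cdot> r1) \<cdot> idm B"
  have fx: "?f x = Some y" using x y al x1 by (auto simp: pcomp_Some)
  have fN: "?f \<in> NN S A B" using NN_gsh[OF st st_cl[OF st al(1) r1(1)] fx] .
  have "ran ?f \<subseteq> ran r1" by (auto simp: ran_def pcomp_Some)
  moreover have "dom ?f \<subseteq> A" by (auto simp: dom_def pcomp_Some)
  ultimately show ?thesis using fx fN r1(3) by blast
qed

lemma sett_swap: "sett X S A B \<Longrightarrow> sett X S B A"
  unfolding sett_def by blast

lemma NN_swap: "NN S A B = NN S B A"
  unfolding NN_def by blast

lemma bot_mixed:
  assumes st: "sett X S A B" and wa: "wa \<in> A" and wb: "wb \<in> B"
    and ra: "\<forall>v\<in>X. reach S v wa" and rb: "\<forall>v\<in>X. reach S v wb"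
  shows "card X \<le> card (NN S A B)"
proof -
  have exA: "\<exists>f. f\<in>NN S A B \<and> f x = Some wb \<and> dom f \<subseteq> A" if x: "x \<in> A" for x
  proof -
    have "x \<in> X" using x st_AB[OF st] by blast
    then obtain \<phi> where phi: "\<phi> \<in> S" "\<phi> x = Some wb" using rb unfolding reach_def by blast
    have fx: "(idm A \<cdot> \<phi> \<cdot> idm B) x = Some wb" using x wb phi by (auto simp: pcomp_Some)
    moreover have "dom (idm A \<cdot> \<phi> \<cdot> idm B) \<subseteq> A" by (auto simp: dom_def pcomp_Some)
    ultimately show ?thesis using NN_gsh[OF st phi(1) fx] by blast
  qed
  have exB: "\<exists>f. f\<in>NN S A B \<and> f x = Some wa \<and> dom f \<subseteq> B" if x: "x \<in> B" for x
  proof -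
    have "x \<in> X" using x st_AB[OF st] by blast
    then obtain \<phi> where phi: "\<phi> \<in> S" "\<phi> x = Some wa" using ra unfolding reach_def by blast
    have fx: "(idm B \<cdot> \<phi> \<cdot> idm A) x = Some wa" using x wa phi by (auto simp: pcomp_Some)
    moreover have "dom (idm B \<cdot> \<phi> \<cdot> idm A) \<subseteq> B" by (auto simp: dom_def pcomp_Some)
    ultimately show ?thesis using NN_hsg[OF st phi(1) fx] by blast
  qed
  define F where "F x = (if x \<in> A then (SOME f. f\<in>NN S A B \<and> f x = Some wb \<and> dom f \<subseteq> A)
                         else (SOME f. f\<in>NN S A B \<and> f x = Some wa \<and> dom f \<subseteq> B))" for x
  have FA: "F x \<in> NN S A B \<and> F x x = Some wb \<and> dom (F x) \<subseteq> A" if "x \<in> A" for x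
    using someI_ex[OF exA[OF that]] that unfolding F_def by simp
  have FB: "F x \<in> NN S A B \<and> F x x = Some wa \<and> dom (F x) \<subseteq> B" if "x \<in> B" for x
  proof -
    have "x \<notin> A" using that st_AB[OF st] by blast
    then show ?thesis using someI_ex[OF exB[OF that]] unfolding F_def by simp
  qed
  have XAB: "X = A \<union> B" using st_AB[OF st] by blast
  have disj: "A \<inter> B = {}" using st_AB[OF st] by blast
  have inj: "inj_on F X"
  proof (rule inj_onI)
    fix x x' assume x: "x \<in> X" and x': "x' \<in> X" and eq: "F x = F x'"
    show "x = x'"
    proof (cases "x \<in> A")
      case True
      then have a: "F x \<in> NN S A B" "F x x = Some wb" "dom (F x) \<subseteq> A" using FA by auto
      have "x' \<in> dom (F x')" using x' XAB FA FB by blast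
      then have x'A: "x' \<in> A" using a(3) eq by (metis subsetD)
      then have "F x x' = Some wb" using FA eq by simp
      then show ?thesis using st_inj[OF st NN_S[OF st a(1)] a(2)] by blast
    next
      case False
      then have xB: "x \<in> B" using x XAB by blast
      then have a: "F x \<in> NN S A B" "F x x = Some wa" "dom (F x) \<subseteq> B" using FB by auto
      have "x' \<in> dom (F x')" using x' XAB FA FB by blast
      then have x'B: "x' \<in> B" using a(3) eq by (metis subsetD)
      then have "F x x' = Some wa" using FB eq by simp
      then show ?thesis using st_inj[OF st NN_S[OF st a(1)] a(2)] by blast
    qed
  qed
  have sub: "F ` X \<subseteq> NN S A B"
  proof
    fix f assume "f \<in> F ` X"
    then obtain x where x: "x \<in> X" "f = F x" by blast
    show "f \<in> NN S A B"
    proof (cases "x \<in> A")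
      case True then show ?thesis using FA x by blast
    next
      case False then have "x \<in> B" using x XAB by blast
      then show ?thesis using FB x by blast
    qed
  qed
  show ?thesis by (rule card_inj_on_le[OF inj sub st_finNN[OF st]])
qed



lemma direct:
  assumes st: "sett X S A B" and w: "w \<in> X" and bot: "\<forall>v\<in>X. reach S v w"
    and D: "D = {v\<in>X. reach S w v}" and allA: "\<forall>a\<in>A. \<forall>v\<in>X. reach S a v" and DA: "D \<inter> A = {}"
  shows "card X - card D \<le> card (NN S A B)"
proof -
  have XAB: "X = A \<union> B" using st_AB[OF st] by blast
  have wD: "w \<in> D" using D w reach_refl[OF st] by blast
  then have wB: "w \<in> B" using DA XAB w by blast
  obtain a0 where a0: "a0 \<in> A" using st_AB[OF st] by blast
  have AX: "A \<subseteq> X" and BX: "B \<subseteq> X" using XAB by auto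
  have F1ex: "\<exists>f. f\<in>NN S A B \<and> f a = Some w \<and> ran f \<subseteq> {v. reach S w v}" if a: "a \<in> A" for a
  proof -
    have t: "\<forall>a'\<in>A. reach S a a'" using allA a AX by blast
    have "reach S a w" using allA a w by blast
    then show ?thesis using mapL[OF st a wB t] by blast
  qed
  have F2ex: "\<exists>f. f\<in>NN S A B \<and> f a0 = Some y \<and> ran f \<subseteq> {v. reach S y v}" if y: "y \<in> B" for y
  proof -
    have t: "\<forall>a'\<in>A. reach S a0 a'" using allA a0 AX by blast
    have "reach S a0 y" using allA a0 y BX by blast
    then show ?thesis using mapL[OF st a0 y t] by blast
  qed
  define G where "G x = (if x \<in> A then (SOME f. f\<in>NN S A B \<and> f x = Some w \<and> ran f \<subseteq> {v. reach S w v})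
                         else (SOME f. f\<in>NN S A B \<and> f a0 = Some x \<and> ran f \<subseteq> {v. reach S x v}))" for x
  have GA: "G x \<in> NN S A B \<and> G x x = Some w \<and> ran (G x) \<subseteq> {v. reach S w v}" if "x \<in> A" for x
    using someI_ex[OF F1ex[OF that]] that unfolding G_def by simp
  have GB: "G x \<in> NN S A B \<and> G x a0 = Some x \<and> ran (G x) \<subseteq> {v. reach S x v}" if "x \<in> B" for x
  proof -
    have "x \<notin> A" using that st_AB[OF st] by blast
    then show ?thesis using someI_ex[OF F2ex[OF that]] unfolding G_def by simp
  qed
  have inj: "inj_on G (X - D)"
  proof (rule inj_onI)
    fix x x' assume x: "x \<in> X - D" and x': "x' \<in> X - D" and eq: "G x = G x'"
    consider "x \<in> A" "x' \<in> A" | "x \<in> A" "x' \<in> B" | "x \<in> B" "x' \<in> A" | "x \<in> B" "x' \<in> B"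
      using x x' XAB by blast
    then show "x = x'"
    proof cases
      case 1
      have N: "G x \<in> S" using NN_S[OF st] GA[OF 1(1)] by blast
      have "G x x' = Some w" using GA[OF 1(2)] eq by simp
      then show ?thesis using st_inj[OF st N] GA[OF 1(1)] by blast
    next
      case 2
      have r: "ran (G x) \<subseteq> {v. reach S w v}" using GA[OF 2(1)] by blast
      have "x' \<in> ran (G x')" using GB[OF 2(2)] by (auto simp: ran_def)
      then have "x' \<in> ran (G x)" using eq by simp
      then have "reach S w x'" using r by blast
      then have "x' \<in> D" unfolding D using x' by blast
      then show ?thesis using x' by blast
    next
      case 3
      have r: "ran (G x') \<subseteq> {v. reach S w v}" using GA[OF 3(2)] by blast
      have "x \<in> ran (G x)" using GB[OF 3(1)] by (auto simp: ran_def)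
      then have "x \<in> ran (G x')" using eq by simp
      then have "reach S w x" using r by blast
      then have "x \<in> D" unfolding D using x by blast
      then show ?thesis using x by blast
    next
      case 4
      have e1: "G x a0 = Some x" using GB[OF 4(1)] by blast
      have e2: "G x' a0 = Some x'" using GB[OF 4(2)] by blast
      have "G x' a0 = Some x" using e1 eq by (simp only:)
      then show ?thesis using e2 by simp
    qed
  qed
  have sub: "G ` (X - D) \<subseteq> NN S A B"
  proof
    fix f assume "f \<in> G ` (X - D)"
    then obtain x where x: "x \<in> X" "f = G x" by blast
    show "f \<in> NN S A B"
    proof (cases "x \<in> A")
      case True then show ?thesis using GA x by blast
    next
      case False then have "x \<in> B" using x XAB by blast
      then show ?thesis using GB x by blast
    qed
  qed
  have "card (X - D) \<le> card (NN S A B)" by (rule card_inj_on_le[OF inj sub st_finNN[OF st]])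
  moreover have "card (X - D) = card X - card D"
  proof -
    have DX: "D \<subseteq> X" unfolding D by blast
    then have "finite D" using finite_subset st_fin[OF st] by blast
    then show ?thesis using DX by (rule card_Diff_subset)
  qed
  ultimately show ?thesis by simp
qed




lemma option_eqI: "(\<And>z. a = Some z \<longleftrightarrow> b = Some z) \<Longrightarrow> a = (b::'a option)"
  by (cases a; cases b) auto

definition invm :: "(nat \<rightharpoonup> nat) \<Rightarrow> (nat \<rightharpoonup> nat)" where
  "invm f = (\<lambda>y. if y \<in> ran f then Some (THE x. f x = Some y) else None)"

lemma invm_Some: assumes p: "pinjX X f" shows "invm f y = Some x \<longleftrightarrow> f x = Some y"
proof
  assume "f x = Some y"
  moreover then have "(THE x. f x = Some y) = x" using pinj_inj[OF p] by blast
  ultimately show "invm f y = Some x" by (auto simp: invm_def ran_def)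
next
  assume a: "invm f y = Some x"
  then have yr: "y \<in> ran f" by (auto simp: invm_def split: if_splits)
  then obtain x0 where x0: "f x0 = Some y" by (auto simp: ran_def)
  then have "(THE x. f x = Some y) = x0" using pinj_inj[OF p] by blast
  then show "f x = Some y" using a yr x0 by (auto simp: invm_def)
qed

lemma pinj_invm: "pinjX X f \<Longrightarrow> pinjX X (invm f)"
  by (rule pinjXI) (auto simp: invm_Some dest: pinj_dom pinj_ran)

lemma invm_invm: assumes p: "pinjX X f" shows "invm (invm f) = f"
  by (rule ext, rule option_eqI) (simp add: invm_Some[OF pinj_invm[OF p]] invm_Some[OF p])

lemma pinj_comp: "pinjX X f \<Longrightarrow> pinjX X g \<Longrightarrow> pinjX X (f \<cdot> g)"
  by (rule pinjXI) (auto simp: pcomp_Some dest: pinj_dom pinj_ran pinj_inj)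

lemma invm_comp: assumes p1: "pinjX X f" and p2: "pinjX X g" shows "invm (f \<cdot> g) = invm g \<cdot> invm f"
  by (rule ext, rule option_eqI)
     (auto simp: invm_Some[OF pinj_comp[OF p1 p2]] invm_Some[OF p1] invm_Some[OF p2] pcomp_Some)

lemma pinj_idm: "A \<subseteq> X \<Longrightarrow> pinjX X (idm A)"
  by (rule pinjXI) auto

lemma invm_idm: assumes "A \<subseteq> X" shows "invm (idm A) = idm A"
  by (rule ext, rule option_eqI) (auto simp: invm_Some[OF pinj_idm[OF assms]])

lemma invm_empty_iff: "pinjX X f \<Longrightarrow> invm f = Map.empty \<longleftrightarrow> f = Map.empty"
proof
  assume p: "pinjX X f" and e: "invm f = Map.empty"
  show "f = Map.empty"
  proof (rule ext)
    fix x show "f x = None"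
    proof (cases "f x")
      case (Some y) then have "invm f y = Some x" using invm_Some[OF p] by blast
      then show ?thesis using e by simp
    qed simp
  qed
next
  assume "f = Map.empty" then show "invm f = Map.empty" by (auto simp: invm_def)
qed

lemma settI: "finite X \<Longrightarrow> \<forall>\<phi>\<in>S. pinjX X \<phi> \<Longrightarrow> \<forall>a\<in>S. \<forall>b\<in>S. a \<cdot> b \<in> S
  \<Longrightarrow> \<forall>x\<in>X. \<forall>y\<in>X. \<exists>\<phi>\<in>S. \<phi> x = Some y \<or> \<phi> y = Some x
  \<Longrightarrow> A \<union> B = X \<Longrightarrow> A \<inter> B = {} \<Longrightarrow> A \<noteq> {} \<Longrightarrow> B \<noteq> {} \<Longrightarrow> idm A \<in> S \<Longrightarrow> idm B \<in> S
  \<Longrightarrow> sett X S A B"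
  unfolding sett_def by simp

context
  fixes X S A B
  assumes st: "sett X S A B"
begin

lemma AX: "A \<subseteq> X" and BX: "B \<subseteq> X" using st_AB[OF st] by auto

lemma sett_inv: "sett X (invm ` S) A B"
proof -
  have p: "\<forall>\<phi>\<in>invm ` S. pinjX X \<phi>"
  proof
    fix \<phi> assume "\<phi> \<in> invm ` S"
    then obtain \<psi> where "\<psi> \<in> S" "\<phi> = invm \<psi>" by blast
    then show "pinjX X \<phi>" using pinj_invm[OF st_pinj[OF st]] by simp
  qed
  have c: "\<forall>a\<in>invm ` S. \<forall>b\<in>invm ` S. a \<cdot> b \<in> invm ` S"
  proof (intro ballI)
    fix a b assume "a \<in> invm ` S" "b \<in> invm ` S"
    then obtain a0 b0 where ab: "a0 \<in> S" "b0 \<in> S" "a = invm a0" "b = invm b0" by blast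
    then have "a \<cdot> b = invm (b0 \<cdot> a0)" using invm_comp[OF st_pinj[OF st ab(2)] st_pinj[OF st ab(1)]] by simp
    then show "a \<cdot> b \<in> invm ` S" using st_cl[OF st ab(2) ab(1)] by blast
  qed
  have s: "\<forall>x\<in>X. \<forall>y\<in>X. \<exists>\<phi>\<in>invm ` S. \<phi> x = Some y \<or> \<phi> y = Some x"
  proof (intro ballI)
    fix x y assume "x \<in> X" "y \<in> X"
    then obtain \<phi> where ph: "\<phi> \<in> S" "\<phi> x = Some y \<or> \<phi> y = Some x" using st_semi[OF st] by blast
    have iv: "invm \<phi> a = Some b \<longleftrightarrow> \<phi> b = Some a" for a b using invm_Some[OF st_pinj[OF st ph(1)]] .
    have "invm \<phi> y = Some x \<or> invm \<phi> x = Some y" using ph(2) iv by blast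
    moreover have "invm \<phi> \<in> invm ` S" using ph(1) by blast
    ultimately show "\<exists>\<phi>\<in>invm ` S. \<phi> x = Some y \<or> \<phi> y = Some x" by blast
  qed
  have iA: "idm A \<in> invm ` S" using invm_idm[OF AX] st_AB(5)[OF st] by (metis image_eqI)
  have iB: "idm B \<in> invm ` S" using invm_idm[OF BX] st_AB(6)[OF st] by (metis image_eqI)
  show ?thesis by (rule settI[OF st_fin[OF st] p c s st_AB(1-4)[OF st] iA iB])
qed

lemma reach_inv: "reach (invm ` S) x y \<longleftrightarrow> reach S y x"
proof
  assume "reach (invm ` S) x y"
  then obtain \<phi> where "\<phi> \<in> S" "invm \<phi> x = Some y" unfolding reach_def by blast
  then show "reach S y x" unfolding reach_def using invm_Some[OF st_pinj[OF st]] by blast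
next
  assume "reach S y x"
  then obtain \<phi> where p: "\<phi> \<in> S" "\<phi> y = Some x" unfolding reach_def by blast
  then have "invm \<phi> x = Some y" using invm_Some[OF st_pinj[OF st p(1)]] by blast
  then show "reach (invm ` S) x y" unfolding reach_def using p(1) by blast
qed

lemma blk_inv: "blk X (invm ` S) x = blk X S x"
  unfolding blk_def reach_inv by blast

lemma sandwich_inv: "sandwich (idm A) (invm ` S) (idm B) = invm ` sandwich (idm B) S (idm A)"
proof -
  have key: "idm A \<cdot> invm \<sigma> \<cdot> idm B = invm (idm B \<cdot> \<sigma> \<cdot> idm A)" if "\<sigma> \<in> S" for \<sigma>
  proof -
    have ps: "pinjX X \<sigma>" using st_pinj[OF st that] .
    have "invm (idm B \<cdot> \<sigma> \<cdot> idm A) = invm (idm A) \<cdot> invm (idm B \<cdot> \<sigma>)"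
      by (rule invm_comp[OF pinj_comp[OF pinj_idm[OF BX] ps] pinj_idm[OF AX]])
    also have "\<dots> = idm A \<cdot> (invm \<sigma> \<cdot> invm (idm B))"
      by (simp only: invm_idm[OF AX] invm_comp[OF pinj_idm[OF BX] ps])
    finally show ?thesis by (simp add: invm_idm[OF BX] pcomp_assoc)
  qed
  show ?thesis unfolding sandwich_def
  proof (intro equalityI subsetI)
    fix f assume "f \<in> {idm A \<cdot> \<sigma> \<cdot> idm B |\<sigma>. \<sigma> \<in> invm ` S}"
    then obtain \<sigma> where s: "\<sigma> \<in> S" "f = idm A \<cdot> invm \<sigma> \<cdot> idm B" by blast
    then have "f = invm (idm B \<cdot> \<sigma> \<cdot> idm A)" using key by simp
    then show "f \<in> invm ` {idm B \<cdot> \<sigma> \<cdot> idm A |\<sigma>. \<sigma> \<in> S}" using s(1) by blast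
  next
    fix f assume "f \<in> invm ` {idm B \<cdot> \<sigma> \<cdot> idm A |\<sigma>. \<sigma> \<in> S}"
    then obtain \<sigma> where s: "\<sigma> \<in> S" "f = invm (idm B \<cdot> \<sigma> \<cdot> idm A)" by blast
    then have "f = idm A \<cdot> invm \<sigma> \<cdot> idm B" using key by simp
    then show "f \<in> {idm A \<cdot> \<sigma> \<cdot> idm B |\<sigma>. \<sigma> \<in> invm ` S}" using s(1) by blast
  qed
qed

lemma sandwich_inv2: "sandwich (idm B) (invm ` S) (idm A) = invm ` sandwich (idm A) S (idm B)"
proof -
  have key: "idm B \<cdot> invm \<sigma> \<cdot> idm A = invm (idm A \<cdot> \<sigma> \<cdot> idm B)" if "\<sigma> \<in> S" for \<sigma>
  proof -
    have ps: "pinjX X \<sigma>" using st_pinj[OF st that] .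
    have "invm (idm A \<cdot> \<sigma> \<cdot> idm B) = invm (idm B) \<cdot> invm (idm A \<cdot> \<sigma>)"
      by (rule invm_comp[OF pinj_comp[OF pinj_idm[OF AX] ps] pinj_idm[OF BX]])
    also have "\<dots> = idm B \<cdot> (invm \<sigma> \<cdot> invm (idm A))"
      by (simp only: invm_idm[OF BX] invm_comp[OF pinj_idm[OF AX] ps])
    finally show ?thesis by (simp add: invm_idm[OF AX] pcomp_assoc)
  qed
  show ?thesis unfolding sandwich_def
  proof (intro equalityI subsetI)
    fix f assume "f \<in> {idm B \<cdot> \<sigma> \<cdot> idm A |\<sigma>. \<sigma> \<in> invm ` S}"
    then obtain \<sigma> where s: "\<sigma> \<in> S" "f = idm B \<cdot> invm \<sigma> \<cdot> idm A" by blast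
    then have "f = invm (idm A \<cdot> \<sigma> \<cdot> idm B)" using key by simp
    then show "f \<in> invm ` {idm A \<cdot> \<sigma> \<cdot> idm B |\<sigma>. \<sigma> \<in> S}" using s(1) by blast
  next
    fix f assume "f \<in> invm ` {idm A \<cdot> \<sigma> \<cdot> idm B |\<sigma>. \<sigma> \<in> S}"
    then obtain \<sigma> where s: "\<sigma> \<in> S" "f = invm (idm A \<cdot> \<sigma> \<cdot> idm B)" by blast
    then have "f = idm B \<cdot> invm \<sigma> \<cdot> idm A" using key by simp
    then show "f \<in> {idm B \<cdot> \<sigma> \<cdot> idm A |\<sigma>. \<sigma> \<in> invm ` S}" using s(1) by blast
  qed
qed

lemma NN_inv: "NN (invm ` S) A B = invm ` NN S A B"
proof -
  let ?U = "sandwich (idm A) S (idm B) \<union> sandwich (idm B) S (idm A)"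
  have sub: "?U \<subseteq> S"
    unfolding sandwich_def using gsh_in_S[OF st] hsg_in_S[OF st] by blast
  have e: "invm f = Map.empty \<longleftrightarrow> f = Map.empty" if "f \<in> ?U" for f
  proof -
    have "f \<in> S" using sub that by blast
    then show ?thesis by (rule invm_empty_iff[OF st_pinj[OF st]])
  qed
  have U: "sandwich (idm A) (invm ` S) (idm B) \<union> sandwich (idm B) (invm ` S) (idm A) = invm ` ?U"
    unfolding sandwich_inv sandwich_inv2 image_Un by (rule Un_commute)
  show ?thesis unfolding NN_def U
  proof (intro equalityI subsetI)
    fix f assume "f \<in> invm ` ?U - {Map.empty}"
    then obtain g where g: "g \<in> ?U" "f = invm g" "f \<noteq> Map.empty" by blast
    then have "g \<noteq> Map.empty" using e[OF g(1)] by simp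
    then show "f \<in> invm ` (?U - {Map.empty})" using g by blast
  next
    fix f assume "f \<in> invm ` (?U - {Map.empty})"
    then obtain g where g: "g \<in> ?U" "f = invm g" "g \<noteq> Map.empty" by blast
    then have "f \<noteq> Map.empty" using e[OF g(1)] by simp
    then show "f \<in> invm ` ?U - {Map.empty}" using g by blast
  qed
qed

lemma card_NN_inv: "card (NN (invm ` S) A B) = card (NN S A B)"
proof -
  have "inj_on invm (NN S A B)"
  proof (rule inj_on_inverseI[where g = invm])
    fix f assume "f \<in> NN S A B"
    then show "invm (invm f) = f" using invm_invm st_pinj[OF st NN_S[OF st]] by blast
  qed
  then show ?thesis unfolding NN_inv by (rule card_image)
qed

end




definition rr :: "nat set \<Rightarrow> (nat \<rightharpoonup> nat) \<Rightarrow> (nat \<rightharpoonup> nat)" where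
  "rr D \<phi> = (\<lambda>x. if x \<in> D then None else (case \<phi> x of None \<Rightarrow> None | Some y \<Rightarrow> if y \<in> D then None else Some y))"

lemma rr_Some: "rr D \<phi> x = Some y \<longleftrightarrow> x \<notin> D \<and> y \<notin> D \<and> \<phi> x = Some y"
  by (auto simp: rr_def split: option.split)

lemma rr_empty: "rr D Map.empty = Map.empty"
  by (auto simp: rr_def)

lemma rr_ran: "ran \<phi> \<subseteq> D \<Longrightarrow> rr D \<phi> = Map.empty"
  by (rule ext) (auto simp: rr_def ran_def split: option.split)

lemma bot_step:
  assumes st: "sett X S A B" and w: "w \<in> X" and bot: "\<forall>v\<in>X. reach S v w"
    and D: "D = {v\<in>X. reach S w v}" and DB: "D \<subseteq> B" and BD: "B - D \<noteq> {}"
  shows "sett (X - D) (rr D ` S) A (B - D) \<and> card (NN (rr D ` S) A (B - D)) + card D \<le> card (NN S A B)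
    \<and> (\<forall>x\<in>X - D. blk (X - D) (rr D ` S) x = blk X S x)"
proof -
  have XAB: "X = A \<union> B" using st_AB[OF st] by blast
  have AB: "A \<inter> B = {}" using st_AB[OF st] by blast
  have AD: "A \<inter> D = {}" using AB DB by blast
  have DX: "D \<subseteq> X" unfolding D by blast
  have inD: "z \<in> D" if "y \<in> D" "\<phi> \<in> S" "\<phi> y = Some z" for y \<phi> z
  proof -
    have "reach S w y" using that(1) unfolding D by blast
    moreover have "reach S y z" using that(2,3) unfolding reach_def by blast
    ultimately have "reach S w z" by (rule reach_trans[OF st])
    moreover have "z \<in> X" using st_X[OF st that(2,3)] by blast
    ultimately show ?thesis unfolding D by blast
  qed
  have hom: "rr D (\<phi> \<cdot> \<psi>) = rr D \<phi> \<cdot> rr D \<psi>" if "\<phi> \<in> S" "\<psi> \<in> S" for \<phi> \<psi>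
  proof (rule ext, rule option_eqI)
    fix x z
    show "rr D (\<phi> \<cdot> \<psi>) x = Some z \<longleftrightarrow> (rr D \<phi> \<cdot> rr D \<psi>) x = Some z"
    proof
      assume "rr D (\<phi> \<cdot> \<psi>) x = Some z"
      then obtain y where y: "x \<notin> D" "z \<notin> D" "\<phi> x = Some y" "\<psi> y = Some z"
        by (auto simp: rr_Some pcomp_Some)
      have "y \<notin> D" using inD[OF _ that(2) y(4)] y(2) by blast
      then show "(rr D \<phi> \<cdot> rr D \<psi>) x = Some z" using y by (auto simp: rr_Some pcomp_Some)
    next
      assume "(rr D \<phi> \<cdot> rr D \<psi>) x = Some z"
      then show "rr D (\<phi> \<cdot> \<psi>) x = Some z" by (auto simp: rr_Some pcomp_Some)
    qed
  qed
  have rA: "rr D (idm A) = idm A"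
    by (rule ext, rule option_eqI) (use AD in \<open>auto simp: rr_Some\<close>)
  have rB: "rr D (idm B) = idm (B - D)"
    by (rule ext, rule option_eqI) (auto simp: rr_Some)
  let ?X = "X - D" and ?S = "rr D ` S" and ?B = "B - D"
  have p: "\<forall>\<phi>\<in>?S. pinjX ?X \<phi>"
  proof
    fix \<phi> assume "\<phi> \<in> ?S"
    then obtain \<psi> where ps: "\<psi> \<in> S" "\<phi> = rr D \<psi>" by blast
    show "pinjX ?X \<phi>"
    proof (rule pinjXI)
      fix x y z assume "\<phi> x = Some z" "\<phi> y = Some z"
      then show "x = y" using ps st_inj[OF st ps(1)] by (auto simp: rr_Some)
    next
      fix x y assume "\<phi> x = Some y"
      then show "x \<in> ?X \<and> y \<in> ?X" using ps st_X[OF st ps(1)] by (auto simp: rr_Some)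
    qed
  qed
  have c: "\<forall>a\<in>?S. \<forall>b\<in>?S. a \<cdot> b \<in> ?S"
  proof (intro ballI)
    fix a b assume "a \<in> ?S" "b \<in> ?S"
    then obtain a0 b0 where ab: "a0 \<in> S" "b0 \<in> S" "a = rr D a0" "b = rr D b0" by blast
    then have "a \<cdot> b = rr D (a0 \<cdot> b0)" using hom[OF ab(1,2)] by simp
    then show "a \<cdot> b \<in> ?S" using st_cl[OF st ab(1,2)] by blast
  qed
  have s: "\<forall>x\<in>?X. \<forall>y\<in>?X. \<exists>\<phi>\<in>?S. \<phi> x = Some y \<or> \<phi> y = Some x"
  proof (intro ballI)
    fix x y assume xy: "x \<in> ?X" "y \<in> ?X"
    then obtain \<phi> where ph: "\<phi> \<in> S" "\<phi> x = Some y \<or> \<phi> y = Some x" using st_semi[OF st] by blast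
    have "rr D \<phi> x = Some y \<or> rr D \<phi> y = Some x" using ph(2) xy by (auto simp: rr_Some)
    moreover have "rr D \<phi> \<in> ?S" using ph(1) by blast
    ultimately show "\<exists>\<phi>\<in>?S. \<phi> x = Some y \<or> \<phi> y = Some x" by blast
  qed
  have iA: "idm A \<in> ?S" using rA st_AB(5)[OF st] by (metis image_eqI)
  have iB: "idm ?B \<in> ?S" using rB st_AB(6)[OF st] by (metis image_eqI)
  have e1: "A \<union> ?B = ?X" using XAB AD by blast
  have e2: "A \<inter> ?B = {}" using AB by blast
  have fX: "finite ?X" using st_fin[OF st] by blast
  have st': "sett ?X ?S A ?B"
    by (rule settI[OF fX p c s e1 e2 st_AB(3)[OF st] BD iA iB])
  have reach': "reach ?S x y \<longleftrightarrow> reach S x y" if "x \<in> ?X" "y \<in> ?X" for x y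
  proof
    assume "reach ?S x y"
    then obtain \<phi> where "\<phi> \<in> S" "rr D \<phi> x = Some y" unfolding reach_def by blast
    then show "reach S x y" unfolding reach_def by (auto simp: rr_Some)
  next
    assume "reach S x y"
    then obtain \<phi> where ph: "\<phi> \<in> S" "\<phi> x = Some y" unfolding reach_def by blast
    then have "rr D \<phi> x = Some y" using that by (auto simp: rr_Some)
    then show "reach ?S x y" unfolding reach_def using ph(1) by blast
  qed
  have blkeq: "\<forall>x\<in>?X. blk ?X ?S x = blk X S x"
  proof
    fix x assume x: "x \<in> ?X"
    show "blk ?X ?S x = blk X S x"
    proof (intro equalityI subsetI)
      fix y assume "y \<in> blk ?X ?S x"
      then have y: "y \<in> ?X" "reach ?S x y" "reach ?S y x" unfolding blk_def by auto
      then show "y \<in> blk X S x" using reach'[OF x y(1)] reach'[OF y(1) x] unfolding blk_def by auto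
    next
      fix y assume "y \<in> blk X S x"
      then have y: "y \<in> X" "reach S x y" "reach S y x" unfolding blk_def by auto
      have "y \<notin> D"
      proof
        assume "y \<in> D"
        then have "reach S w y" unfolding D by blast
        then have "reach S w x" using y(3) reach_trans[OF st] by blast
        then show False using x unfolding D by blast
      qed
      then have y': "y \<in> ?X" using y by blast
      then show "y \<in> blk ?X ?S x" using reach'[OF x y'] reach'[OF y' x] y unfolding blk_def by auto
    qed
  qed
  have AX: "A \<subseteq> X" using XAB by blast
  obtain xa where xa: "xa \<in> A" "\<forall>a\<in>A. reach S xa a"
    using exists_top[OF st finite_subset[OF AX st_fin[OF st]] st_AB(3)[OF st] AX] by blast
  have Fex: "\<exists>f. f \<in> NN S A B \<and> f xa = Some y \<and> ran f \<subseteq> D" if y: "y \<in> D" for y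
  proof -
    have yB: "y \<in> B" using y DB by blast
    have "xa \<in> X" using xa AX by blast
    then have "reach S xa w" using bot by blast
    moreover have wy: "reach S w y" using y unfolding D by blast
    ultimately have "reach S xa y" by (rule reach_trans[OF st])
    then obtain f where f: "f \<in> NN S A B" "f xa = Some y" "ran f \<subseteq> {v. reach S y v}"
      using mapL[OF st xa(1) yB xa(2)] by blast
    have "ran f \<subseteq> D"
    proof
      fix v assume v: "v \<in> ran f"
      then have "reach S y v" using f(3) by blast
      then have "reach S w v" using wy reach_trans[OF st] by blast
      moreover have "v \<in> X" using reach_X[OF st \<open>reach S y v\<close>] by blast
      ultimately show "v \<in> D" unfolding D by blast
    qed
    then show ?thesis using f by blast
  qed
  define F where "F y = (SOME f. f \<in> NN S A B \<and> f xa = Some y \<and> ran f \<subseteq> D)" for y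
  have FD: "F y \<in> NN S A B \<and> F y xa = Some y \<and> ran (F y) \<subseteq> D" if "y \<in> D" for y
    using someI_ex[OF Fex[OF that]] unfolding F_def .
  have injF: "inj_on F D"
  proof (rule inj_onI)
    fix y y' assume y: "y \<in> D" "y' \<in> D" "F y = F y'"
    have e1: "F y xa = Some y" using FD[OF y(1)] by blast
    have e2: "F y' xa = Some y'" using FD[OF y(2)] by blast
    have "F y xa = Some y'" using e2 y(3) by (simp only:)
    then show "y = y'" using e1 by simp
  qed
  have FN: "F ` D \<subseteq> NN S A B" using FD by blast
  have Fz: "rr D f = Map.empty" if "f \<in> F ` D" for f
    using that FD rr_ran by blast
  have finN: "finite (NN S A B)" using st_finNN[OF st] .
  have sub: "NN ?S A ?B \<subseteq> rr D ` (NN S A B - F ` D)"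
  proof
    fix f' assume f': "f' \<in> NN ?S A ?B"
    then have ne: "f' \<noteq> Map.empty" unfolding NN_def by blast
    from f' obtain \<sigma> where sg: "\<sigma> \<in> S" "f' = idm A \<cdot> rr D \<sigma> \<cdot> idm ?B \<or> f' = idm ?B \<cdot> rr D \<sigma> \<cdot> idm A"
      unfolding NN_def sandwich_def by blast
    obtain f where f: "f = idm A \<cdot> \<sigma> \<cdot> idm B \<or> f = idm B \<cdot> \<sigma> \<cdot> idm A" and rf: "rr D f = f'"
    proof (cases "f' = idm A \<cdot> rr D \<sigma> \<cdot> idm ?B")
      case True
      have "rr D (idm A \<cdot> \<sigma> \<cdot> idm B) = rr D (idm A \<cdot> \<sigma>) \<cdot> rr D (idm B)"
        by (rule hom[OF st_cl[OF st st_AB(5)[OF st] sg(1)] st_AB(6)[OF st]])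
      also have "\<dots> = idm A \<cdot> rr D \<sigma> \<cdot> idm ?B"
        using hom[OF st_AB(5)[OF st] sg(1)] rA rB by simp
      finally show ?thesis using that True by blast
    next
      case False
      then have T: "f' = idm ?B \<cdot> rr D \<sigma> \<cdot> idm A" using sg(2) by blast
      have "rr D (idm B \<cdot> \<sigma> \<cdot> idm A) = rr D (idm B \<cdot> \<sigma>) \<cdot> rr D (idm A)"
        by (rule hom[OF st_cl[OF st st_AB(6)[OF st] sg(1)] st_AB(5)[OF st]])
      also have "\<dots> = idm ?B \<cdot> rr D \<sigma> \<cdot> idm A"
        using hom[OF st_AB(6)[OF st] sg(1)] rA rB by simp
      finally show ?thesis using that T by blast
    qed
    have fne: "f \<noteq> Map.empty" using rf ne rr_empty by metis
    have fN: "f \<in> NN S A B" using f fne sg(1) unfolding NN_def sandwich_def by blast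
    have "f \<notin> F ` D" using Fz rf ne by blast
    then show "f' \<in> rr D ` (NN S A B - F ` D)" using fN rf by blast
  qed
  have "card (NN ?S A ?B) \<le> card (rr D ` (NN S A B - F ` D))"
    using finN by (intro card_mono[OF _ sub]) auto
  also have "\<dots> \<le> card (NN S A B - F ` D)" using finN by (intro card_image_le) auto
  also have "\<dots> = card (NN S A B) - card (F ` D)" using finN FN by (intro card_Diff_subset) (auto intro: finite_subset)
  also have "card (F ` D) = card D" using injF by (rule card_image)
  finally have c1: "card (NN ?S A ?B) \<le> card (NN S A B) - card D" .
  have "card (F ` D) \<le> card (NN S A B)" using finN FN by (rule card_mono)
  then have "card D \<le> card (NN S A B)" using card_image[OF injF] by simp
  then have "card (NN ?S A ?B) + card D \<le> card (NN S A B)" using c1 by linarith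
  then show ?thesis using st' blkeq by blast
qed




lemma case_bot:
  assumes IH: "\<And>X' S' A' B' x'. card X' < card X \<Longrightarrow> sett X' S' A' B' \<Longrightarrow> x' \<in> X'
                 \<Longrightarrow> card X' - card (blk X' S' x') \<le> card (NN S' A' B')"
    and st: "sett X S A B" and x0: "x0 \<in> X" and w: "w \<in> X" and bot: "\<forall>v\<in>X. reach S v w"
    and x0D: "\<not> reach S w x0" and DB: "{v\<in>X. reach S w v} \<subseteq> B" and BD: "B - {v\<in>X. reach S w v} \<noteq> {}"
  shows "card X - card (blk X S x0) \<le> card (NN S A B)"
proof -
  define D where "D = {v\<in>X. reach S w v}"
  have DB': "D \<subseteq> B" and BD': "B - D \<noteq> {}" using DB BD unfolding D_def by auto
  obtain st': "sett (X - D) (rr D ` S) A (B - D)"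
    and cnt: "card (NN (rr D ` S) A (B - D)) + card D \<le> card (NN S A B)"
    and be: "\<forall>x\<in>X - D. blk (X - D) (rr D ` S) x = blk X S x"
    using bot_step[OF st w bot D_def DB' BD'] by blast
  have fin: "finite X" using st_fin[OF st] .
  have DX: "D \<subseteq> X" unfolding D_def by blast
  have wD: "w \<in> D" unfolding D_def using w reach_refl[OF st w] by blast
  have x0': "x0 \<in> X - D" using x0 x0D unfolding D_def by blast
  have ps: "X - D \<subset> X" using wD w by blast
  have lt: "card (X - D) < card X" by (rule psubset_card_mono[OF fin ps])
  have ih: "card (X - D) - card (blk (X - D) (rr D ` S) x0) \<le> card (NN (rr D ` S) A (B - D))"
    using IH[OF lt st' x0'] .
  have T: "blk (X - D) (rr D ` S) x0 = blk X S x0" using be x0' by blast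
  have TX: "blk X S x0 \<subseteq> X - D" using T unfolding blk_def by blast
  have finD: "finite D" using finite_subset[OF DX fin] .
  have cXD: "card (X - D) = card X - card D" using card_Diff_subset[OF finD DX] .
  have "card (blk X S x0) \<le> card (X - D)" using card_mono[OF _ TX] fin by blast
  moreover have "card D \<le> card X" using card_mono[OF fin DX] .
  moreover have ih2: "card (X - D) - card (blk X S x0) \<le> card (NN (rr D ` S) A (B - D))"
    using ih T by simp
  ultimately show ?thesis using cXD cnt by linarith
qed

lemma case_direct:
  assumes st: "sett X S A B" and w: "w \<in> X" and bot: "\<forall>v\<in>X. reach S v w"
    and u: "u \<in> X" and top: "\<forall>v\<in>X. reach S u v" and x0: "x0 \<in> X"
    and x0b: "reach S w x0" and x0t: "\<not> reach S x0 u"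
    and full: "(\<forall>v\<in>X. reach S v u \<longrightarrow> v \<in> A) \<and> (\<forall>a\<in>A. reach S a u)
             \<or> (\<forall>v\<in>X. reach S v u \<longrightarrow> v \<in> B) \<and> (\<forall>b\<in>B. reach S b u)"
  shows "card X - card (blk X S x0) \<le> card (NN S A B)"
proof -
  define D where "D = {v\<in>X. reach S w v}"
  have blkD: "blk X S x0 = D"
  proof (intro equalityI subsetI)
    fix y assume "y \<in> blk X S x0"
    then have y: "y \<in> X" "reach S x0 y" unfolding blk_def by auto
    then have "reach S w y" using x0b reach_trans[OF st] by blast
    then show "y \<in> D" unfolding D_def using y by blast
  next
    fix y assume "y \<in> D"
    then have y: "y \<in> X" "reach S w y" unfolding D_def by auto
    have "reach S x0 y" using bot x0 y(2) reach_trans[OF st] by blast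
    moreover have "reach S y x0" using bot y(1) x0b reach_trans[OF st] by blast
    ultimately show "y \<in> blk X S x0" unfolding blk_def using y by blast
  qed
  have noD: "\<not> reach S v u" if "v \<in> D" for v
  proof
    assume vu: "reach S v u"
    have "reach S w v" using that unfolding D_def by blast
    have "reach S x0 w" using bot x0 by blast
    then have "reach S x0 v" using \<open>reach S w v\<close> reach_trans[OF st] by blast
    then have "reach S x0 u" using vu reach_trans[OF st] by blast
    then show False using x0t by blast
  qed
  have XAB: "X = A \<union> B" using st_AB[OF st] by blast
  from full show ?thesis
  proof
    assume f: "(\<forall>v\<in>X. reach S v u \<longrightarrow> v \<in> A) \<and> (\<forall>a\<in>A. reach S a u)"
    have allA: "\<forall>a\<in>A. \<forall>v\<in>X. reach S a v" using f top reach_trans[OF st] by blast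
    have DA: "D \<inter> A = {}" using f noD by blast
    show ?thesis using direct[OF st w bot D_def allA DA] blkD by simp
  next
    assume f: "(\<forall>v\<in>X. reach S v u \<longrightarrow> v \<in> B) \<and> (\<forall>b\<in>B. reach S b u)"
    have allB: "\<forall>a\<in>B. \<forall>v\<in>X. reach S a v" using f top reach_trans[OF st] by blast
    have DB: "D \<inter> B = {}" using f noD by blast
    show ?thesis using direct[OF sett_swap[OF st] w bot D_def allB DB] blkD NN_swap by metis
  qed
qed




lemma main_gen: "sett X S A B \<Longrightarrow> x0 \<in> X \<Longrightarrow> card X - card (blk X S x0) \<le> card (NN S A B)"
proof (induction "card X" arbitrary: X S A B x0 rule: less_induct)
  case less
  have IH: "\<And>X' S' A' B' x'. card X' < card X \<Longrightarrow> sett X' S' A' B' \<Longrightarrow> x' \<in> X'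
                 \<Longrightarrow> card X' - card (blk X' S' x') \<le> card (NN S' A' B')"
    using less.hyps by blast
  have st: "sett X S A B" and x0: "x0 \<in> X" using less.prems by auto
  have fin: "finite X" using st_fin[OF st] .
  have XAB: "X = A \<union> B" using st_AB[OF st] by blast
  have Xne: "X \<noteq> {}" using x0 by blast
  obtain w where w: "w \<in> X" "\<forall>v\<in>X. reach S v w" using exists_bot[OF st fin Xne subset_refl] by blast
  obtain u where u: "u \<in> X" "\<forall>v\<in>X. reach S u v" using exists_top[OF st fin Xne subset_refl] by blast
  let ?Sv = "invm ` S"
  have stv: "sett X ?Sv A B" using sett_inv[OF st] .
  have rv: "reach ?Sv x y \<longleftrightarrow> reach S y x" for x y using reach_inv[OF st] .
  have bv: "blk X ?Sv x0 = blk X S x0" using blk_inv[OF st] .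
  have cv: "card (NN ?Sv A B) = card (NN S A B)" using card_NN_inv[OF st] .
  have trans: "reach S x y \<Longrightarrow> reach S y z \<Longrightarrow> reach S x z" for x y z using reach_trans[OF st] .
  have AX: "A \<subseteq> X" and BX: "B \<subseteq> X" using XAB by auto
  show ?case
  proof (cases "reach S w x0 \<and> reach S x0 u")
    case True
    have "blk X S x0 = X"
    proof (intro equalityI subsetI)
      fix v assume "v \<in> X"
      then have "reach S x0 v" "reach S v x0" using True u w trans by blast+
      then show "v \<in> blk X S x0" unfolding blk_def using \<open>v \<in> X\<close> by blast
    qed (auto simp: blk_def)
    then show ?thesis by simp
  next
    case nb: False
    show ?thesis
    proof (cases "(\<exists>a\<in>A. reach S w a) \<and> (\<exists>b\<in>B. reach S w b)")
      case True
      then obtain a b where ab: "a \<in> A" "reach S w a" "b \<in> B" "reach S w b" by blast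
      have "\<forall>v\<in>X. reach S v a" "\<forall>v\<in>X. reach S v b" using ab w trans by blast+
      then have "card X \<le> card (NN S A B)" using bot_mixed[OF st ab(1) ab(3)] by blast
      then show ?thesis by linarith
    next
      case nmb: False
      show ?thesis
      proof (cases "(\<exists>a\<in>A. reach S a u) \<and> (\<exists>b\<in>B. reach S b u)")
        case True
        then obtain a b where ab: "a \<in> A" "reach S a u" "b \<in> B" "reach S b u" by blast
        have "\<forall>v\<in>X. reach ?Sv v a" "\<forall>v\<in>X. reach ?Sv v b" using ab u trans rv by blast+
        then have "card X \<le> card (NN ?Sv A B)" using bot_mixed[OF stv ab(1) ab(3)] by blast
        then show ?thesis using cv by linarith
      next
        case nmt: False
        let ?Db = "{v\<in>X. reach S w v}" and ?Dt = "{v\<in>X. reach S v u}"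
        have Dtv: "{v\<in>X. reach ?Sv u v} = ?Dt" using rv by blast
        have botv: "\<forall>v\<in>X. reach ?Sv v u" using u rv by blast
        have topv: "\<forall>v\<in>X. reach ?Sv w v" using w rv by blast
        show ?thesis
        proof (cases "\<not> reach S w x0 \<and> ?Db \<subseteq> B \<and> B - ?Db \<noteq> {}")
          case True
          then show ?thesis using case_bot[OF IH st x0 w(1) w(2)] by blast
        next
          case s1: False
          show ?thesis
          proof (cases "\<not> reach S w x0 \<and> ?Db \<subseteq> A \<and> A - ?Db \<noteq> {}")
            case True
            then show ?thesis using case_bot[OF IH sett_swap[OF st] x0 w(1) w(2)] NN_swap by metis
          next
            case s2: False
            show ?thesis
            proof (cases "\<not> reach S x0 u \<and> ?Dt \<subseteq> B \<and> B - ?Dt \<noteq> {}")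
              case True
              then have c: "\<not> reach ?Sv u x0" "{v\<in>X. reach ?Sv u v} \<subseteq> B" "B - {v\<in>X. reach ?Sv u v} \<noteq> {}"
                using rv Dtv by auto
              show ?thesis using case_bot[OF IH stv x0 u(1) botv c] bv cv by simp
            next
              case s3: False
              show ?thesis
              proof (cases "\<not> reach S x0 u \<and> ?Dt \<subseteq> A \<and> A - ?Dt \<noteq> {}")
                case True
                then have c: "\<not> reach ?Sv u x0" "{v\<in>X. reach ?Sv u v} \<subseteq> A" "A - {v\<in>X. reach ?Sv u v} \<noteq> {}"
                  using rv Dtv by auto
                have "card X - card (blk X ?Sv x0) \<le> card (NN ?Sv B A)"
                  using case_bot[OF IH sett_swap[OF stv] x0 u(1) botv c] .
                then show ?thesis using bv cv NN_swap by metis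
              next
                case s4: False
                let ?fbA = "(\<forall>v\<in>X. reach S w v \<longrightarrow> v \<in> A) \<and> (\<forall>a\<in>A. reach S w a)"
                let ?fbB = "(\<forall>v\<in>X. reach S w v \<longrightarrow> v \<in> B) \<and> (\<forall>b\<in>B. reach S w b)"
                let ?ftA = "(\<forall>v\<in>X. reach S v u \<longrightarrow> v \<in> A) \<and> (\<forall>a\<in>A. reach S a u)"
                let ?ftB = "(\<forall>v\<in>X. reach S v u \<longrightarrow> v \<in> B) \<and> (\<forall>b\<in>B. reach S b u)"
                have fb: "reach S w x0 \<or> ?fbA \<or> ?fbB"
                proof (cases "\<exists>a\<in>A. reach S w a")
                  case True
                  then have "\<forall>b\<in>B. \<not> reach S w b" using nmb by blast
                  then have "?Db \<subseteq> A" using XAB by blast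
                  then show ?thesis using s2 AX by blast
                next
                  case False
                  then have "?Db \<subseteq> B" using XAB by blast
                  then show ?thesis using s1 BX by blast
                qed
                have ft: "reach S x0 u \<or> ?ftA \<or> ?ftB"
                proof (cases "\<exists>a\<in>A. reach S a u")
                  case True
                  then have "\<forall>b\<in>B. \<not> reach S b u" using nmt by blast
                  then have "?Dt \<subseteq> A" using XAB by blast
                  then show ?thesis using s4 AX by blast
                next
                  case False
                  then have "?Dt \<subseteq> B" using XAB by blast
                  then show ?thesis using s3 BX by blast
                qed
                show ?thesis
                proof (cases "reach S w x0")
                  case True
                  then have x0t: "\<not> reach S x0 u" using nb by blast
                  then have full: "?ftA \<or> ?ftB" using ft by blast
                  show ?thesis using case_direct[OF st w(1) w(2) u(1) u(2) x0 True x0t full] .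
                next
                  case x0b: False
                  show ?thesis
                  proof (cases "reach S x0 u")
                    case True
                    have full: "?fbA \<or> ?fbB" using fb x0b by blast
                    have full': "(\<forall>v\<in>X. reach ?Sv v w \<longrightarrow> v \<in> A) \<and> (\<forall>a\<in>A. reach ?Sv a w)
                       \<or> (\<forall>v\<in>X. reach ?Sv v w \<longrightarrow> v \<in> B) \<and> (\<forall>b\<in>B. reach ?Sv b w)"
                      using full rv by simp
                    have "reach ?Sv u x0" "\<not> reach ?Sv x0 w" using True x0b rv by auto
                    then have "card X - card (blk X ?Sv x0) \<le> card (NN ?Sv A B)"
                      using case_direct[OF stv u(1) botv w(1) topv x0 _ _ full'] by blast
                    then show ?thesis using bv cv by simp
                  next
                    case x0t: False
                    have full1: "?fbA \<or> ?fbB" using fb x0b by blast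
                    have full2: "?ftA \<or> ?ftB" using ft x0t by blast
                    have mid: "\<not> (reach S w v \<and> reach S v u)" for v
                    proof
                      assume "reach S w v \<and> reach S v u"
                      then have "reach S w u" using trans by blast
                      then have "reach S w x0" using u x0 trans by blast
                      then show False using x0b by blast
                    qed
                    obtain a where a: "a \<in> A" using st_AB[OF st] by blast
                    obtain b where b: "b \<in> B" using st_AB[OF st] by blast
                    have "x0 \<in> A \<or> x0 \<in> B" using x0 XAB by blast
                    then show ?thesis using full1 full2 mid a b x0b x0t by blast
                  qed
                qed
              qed
            qed
          qed
        qed
      qed
    qed
  qed
qed




fun pw :: "nat \<Rightarrow> (nat \<rightharpoonup> nat) \<Rightarrow> (nat \<rightharpoonup> nat)" where
  "pw 0 f = f"
| "pw (Suc k) f = pw k f \<cdot> f"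

lemma pw_in: "subsemigroup S \<Longrightarrow> f \<in> S \<Longrightarrow> pw k f \<in> S"
  by (induction k) (auto simp: subsemigroup_def)

lemma pw_fix: "f x = Some x \<Longrightarrow> pw k f x = Some x"
  by (induction k) (auto simp: pcomp_Some)

lemma pw_add: "pw a f \<cdot> pw b f = pw (a + b + 1) f"
proof (induction b)
  case 0 then show ?case by simp
next
  case (Suc b)
  have "pw a f \<cdot> pw (Suc b) f = (pw a f \<cdot> pw b f) \<cdot> f" by (simp add: pcomp_assoc)
  also have "\<dots> = pw (a + Suc b + 1) f" using Suc by simp
  finally show ?case .
qed

lemma pw_idem:
  assumes fin: "finite S" and ss: "subsemigroup S" and f: "f \<in> S"
  shows "\<exists>m. pw m f \<cdot> pw m f = pw m f"
proof -
  have "range (\<lambda>k. pw k f) \<subseteq> S" using pw_in[OF ss f] by blast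
  then have "finite (range (\<lambda>k. pw k f))" using fin finite_subset by blast
  then have "\<not> inj (\<lambda>k. pw k f)" using finite_imageD by blast
  then obtain i j where ij: "i \<noteq> j" "pw i f = pw j f" unfolding inj_def by blast
  then obtain i j where ij: "i < j" "pw i f = pw j f"
    by (metis linorder_neqE_nat)
  define p where "p = j - i"
  have p: "p \<ge> 1" "j = i + p" using ij unfolding p_def by auto
  have sh: "pw (i + t) f = pw (i + t + p) f" for t
  proof (induction t)
    case 0 then show ?case using ij p by simp
  next
    case (Suc t)
    have "pw (i + Suc t) f = pw (i + t) f \<cdot> f" by simp
    also have "\<dots> = pw (i + t + p) f \<cdot> f" using Suc by simp
    also have "\<dots> = pw (i + Suc t + p) f" by simp
    finally show ?case .
  qed
  have per: "pw (i + t) f = pw (i + t + c * p) f" for t c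
  proof (induction c arbitrary: t)
    case 0 then show ?case by simp
  next
    case (Suc c)
    have "pw (i + t + Suc c * p) f = pw (i + (t + p) + c * p) f" by (simp add: algebra_simps)
    also have "\<dots> = pw (i + (t + p)) f" using Suc[of "t + p"] by simp
    also have "\<dots> = pw (i + t) f" using sh[of t] by (simp add: add.assoc)
    finally show ?case by simp
  qed
  define m where "m = Suc i * p - 1"
  have "i * 1 \<le> i * p" using p(1) by (rule mult_le_mono2)
  then have ip: "i \<le> i * p" by simp
  have mi: "m \<ge> i" unfolding m_def mult_Suc using ip p(1) by linarith
  have m1: "Suc m = Suc i * p" using p unfolding m_def by (simp add: mult_Suc)
  have "pw m f \<cdot> pw m f = pw (m + m + 1) f" by (rule pw_add)
  also have "m + m + 1 = i + (m - i) + Suc i * p" using mi m1 by simp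
  also have "pw (i + (m - i) + Suc i * p) f = pw (i + (m - i)) f" using per[of "m - i" "Suc i"] by (rule sym)
  also have "i + (m - i) = m" using mi by simp
  finally show ?thesis by blast
qed

lemma idem_idm:
  assumes p: "pinjX X e" and ee: "e \<cdot> e = e"
  shows "e = idm (dom e)"
proof (rule ext)
  fix x
  show "e x = idm (dom e) x"
  proof (cases "e x")
    case None then show ?thesis by (auto simp: idm_def)
  next
    case (Some y)
    have "(e \<cdot> e) x = Some y" using ee Some by simp
    then have "e y = Some y" using Some by (simp add: pcomp_Some)
    then have "x = y" using pinj_inj[OF p Some] by blast
    then show ?thesis using Some by (auto simp: idm_def)
  qed
qed

lemma idm_comp: "idm A \<cdot> idm B = idm (A \<inter> B)"
  by (rule ext, rule option_eqI) (auto simp: pcomp_Some)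

theorem lemma3p3:
  fixes n :: nat and S :: "(nat \<rightharpoonup> nat) set" and g h :: "nat \<rightharpoonup> nat"
  assumes "n \<ge> 2"
    and "S \<subseteq> symInv n - symGrp n"
    and "subsemigroup S"
    and "semitransitive n S"
    and "card S \<le> 2 * n"
    and "g \<noteq> h" and "nz_idempotents S = {g, h}"
  shows "card ((sandwich g S h \<union> sandwich h S g) - {Map.empty})
           \<ge> n - Min (card ` blocks n S)"
proof -
  note n2 = assms(1) and SI = assms(2) and ss = assms(3) and semi = assms(4) and idem = assms(7)
  let ?X = "{1..n}"
  have pj: "pinjX ?X \<phi>" if "\<phi> \<in> S" for \<phi>
    using SI that unfolding symInv_def pinj_def pinjX_def by blast
  have cl: "a \<cdot> b \<in> S" if "a \<in> S" "b \<in> S" for a b using ss that unfolding subsemigroup_def by blast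
  have finS: "finite S"
  proof -
    have "S \<subseteq> {f. dom f \<subseteq> ?X \<and> ran f \<subseteq> ?X}" using pj unfolding pinjX_def by blast
    then show ?thesis by (rule finite_subset) (rule finite_maps, simp)
  qed
  have gS: "g \<in> S" "g \<cdot> g = g" "g \<noteq> Map.empty" using idem unfolding nz_idempotents_def by blast+
  have hS: "h \<in> S" "h \<cdot> h = h" "h \<noteq> Map.empty" using idem unfolding nz_idempotents_def by blast+
  have gi: "g = idm (dom g)" using idem_idm[OF pj[OF gS(1)] gS(2)] .
  have hi: "h = idm (dom h)" using idem_idm[OF pj[OF hS(1)] hS(2)] .
  have cover: "x \<in> dom g \<or> x \<in> dom h" if x: "x \<in> ?X" for x
  proof -
    obtain \<phi> where ph: "\<phi> \<in> S" "\<phi> x = Some x" using semi x unfolding semitransitive_def by blast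
    obtain m where m: "pw m \<phi> \<cdot> pw m \<phi> = pw m \<phi>" using pw_idem[OF finS ss ph(1)] by blast
    have "pw m \<phi> x = Some x" using pw_fix[of \<phi> x m, OF ph(2)] .
    then have "pw m \<phi> \<in> nz_idempotents S" using m pw_in[OF ss ph(1)]
      unfolding nz_idempotents_def by auto
    then have "pw m \<phi> = g \<or> pw m \<phi> = h" using idem by blast
    then show ?thesis using \<open>pw m \<phi> x = Some x\<close> by blast
  qed
  have domX: "dom g \<subseteq> ?X" "dom h \<subseteq> ?X" using pj gS(1) hS(1) unfolding pinjX_def by blast+
  have un: "dom g \<union> dom h = ?X" using cover domX by blast
  have disj: "dom g \<inter> dom h = {}"
  proof (rule ccontr)
    assume "dom g \<inter> dom h \<noteq> {}"
    let ?gh = "g \<cdot> h"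
    have ghS: "?gh \<in> S" using cl gS(1) hS(1) .
    have ghe: "?gh = idm (dom g \<inter> dom h)" using gi hi idm_comp by metis
    have "?gh \<cdot> ?gh = ?gh" using ghe idm_comp by simp
    moreover have "?gh \<noteq> Map.empty"
    proof -
      obtain x where "x \<in> dom g \<inter> dom h" using \<open>dom g \<inter> dom h \<noteq> {}\<close> by blast
      then have "?gh x = Some x" using ghe by simp
      then show ?thesis by auto
    qed
    ultimately have "?gh \<in> nz_idempotents S" using ghS unfolding nz_idempotents_def by blast
    then have "?gh = g \<or> ?gh = h" using idem by blast
    then show False
    proof
      assume "?gh = g"
      then have "dom g \<subseteq> dom h" using ghe by (metis Int_lower2 dom_idm)
      then have "dom h = ?X" using un domX by blast
      then have "h \<in> symGrp n" using SI hS(1) unfolding symGrp_def by blast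
      then show False using SI hS(1) by blast
    next
      assume "?gh = h"
      then have "dom h \<subseteq> dom g" using ghe by (metis Int_lower1 dom_idm)
      then have "dom g = ?X" using un domX by blast
      then have "g \<in> symGrp n" using SI gS(1) unfolding symGrp_def by blast
      then show False using SI gS(1) by blast
    qed
  qed
  have ne: "dom g \<noteq> {}" "dom h \<noteq> {}" using gS(3) hS(3) by auto
  have st: "sett ?X S (dom g) (dom h)"
  proof (rule settI)
    show "finite ?X" by simp
    show "\<forall>\<phi>\<in>S. pinjX ?X \<phi>" using pj by blast
    show "\<forall>a\<in>S. \<forall>b\<in>S. a \<cdot> b \<in> S" using cl by blast
    show "\<forall>x\<in>?X. \<forall>y\<in>?X. \<exists>\<phi>\<in>S. \<phi> x = Some y \<or> \<phi> y = Some x" using semi unfolding semitransitive_def by blast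
    show "dom g \<union> dom h = ?X" by (rule un)
    show "dom g \<inter> dom h = {}" by (rule disj)
    show "dom g \<noteq> {}" "dom h \<noteq> {}" by (rule ne(1), rule ne(2))
    show "idm (dom g) \<in> S" using gi gS(1) by simp
    show "idm (dom h) \<in> S" using hi hS(1) by simp
  qed
  have NNeq: "NN S (dom g) (dom h) = (sandwich g S h \<union> sandwich h S g) - {Map.empty}"
    unfolding NN_def using gi hi by simp
  have bl: "blocks n S = blk ?X S ` ?X" unfolding blocks_def blk_def by simp
  have "finite (card ` blocks n S)" unfolding bl by simp
  moreover have "card ` blocks n S \<noteq> {}" unfolding bl using n2 by simp
  ultimately have "Min (card ` blocks n S) \<in> card ` blocks n S" by (rule Min_in)
  then obtain x0 where x0: "x0 \<in> ?X" "Min (card ` blocks n S) = card (blk ?X S x0)" unfolding bl by blast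
  have "card ?X - card (blk ?X S x0) \<le> card (NN S (dom g) (dom h))" using main_gen[OF st x0(1)] .
  then show ?thesis using x0(2) NNeq by simp
qed


end
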